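(* Let $U\subset(0,1)^m$ be open and let $b:U\to\mathbb{R}$ be given by $b(x)=ax^\mu=a\prod_{i=1}^m x_i^{\mu_i}$ for some $a\in\mathbb{R}$ and $\mu\in\mathbb{R}^m$, and suppose $b$ is $C^1$-bounded (i.e. $b$ and all its first-order partial derivatives are bounded on $U$). Then there exist $A,B>0$ depending only on $b$ such that the following holds: for every integer $r>0$, every integer $l\ge1$ and all $n_1,\ldots,n_m$ with $n_i\ge r^l$ for all $i$, letting $\phi:(0,1)^m\to(0,1)^m$, $\phi(x)=(x_1^{n_1},\ldots,x_m^{n_m})$, and $V=\phi^{-1}(U)$, the map $(b\circ\phi)^{1/r^{l-1}}:V\to\mathbb{R}$ is $(\max(n_1,\ldots,n_m)A,B,0)$-mild up to order $r$.
   Context: For $V\subset\mathbb{R}^d$ open, $A,B>0$, $C\ge0$, $r$ a positive integer: $g:V\to\mathbb{R}$ is $(A,B,C)$-mild up to order $r$ if it is $C^r$ and $|g^{(\nu)}(x)|\le B^{C+1}A^{|\nu|}|\nu|!^{C+1}$ for all $x\in V$ and all $\nu\in\mathbb{N}^d$ with $|\nu|\le r$, where $g^{(\nu)}=\partial^{|\nu|}g/\partial x_1^{\nu_1}\cdots\partial x_d^{\nu_d}$ and $|\nu|=\sum\nu_i$. *)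

theory Defs
  imports "HOL-Analysis.Analysis"
begin

definition pd :: "'m::finite \<Rightarrow> (real^'m \<Rightarrow> real) \<Rightarrow> real^'m \<Rightarrow> real" where
  "pd i g x = deriv (\<lambda>t. g (x + t *\<^sub>R axis i 1)) 0"

fun Cr_on :: "nat \<Rightarrow> (real^'m::finite) set \<Rightarrow> (real^'m \<Rightarrow> real) \<Rightarrow> bool" where
  "Cr_on 0 V g = continuous_on V g"
| "Cr_on (Suc k) V g = (continuous_on V g \<and>
     (\<forall>i. \<forall>x\<in>V. (\<lambda>t. g (x + t *\<^sub>R axis i 1)) differentiable (at 0)) \<and>
     (\<forall>i. Cr_on k V (pd i g)))"

primrec pderivs :: "'m::finite list \<Rightarrow> (real^'m \<Rightarrow> real) \<Rightarrow> real^'m \<Rightarrow> real" where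
  "pderivs [] g = g"
| "pderivs (i # is) g = pd i (pderivs is g)"

text \<open>g^(nu): nu_i-fold partial derivative in direction i (for C^r functions the order is irrelevant).\<close>
definition mderiv :: "('m::finite \<Rightarrow> nat) \<Rightarrow> (real^'m \<Rightarrow> real) \<Rightarrow> real^'m \<Rightarrow> real" where
  "mderiv \<nu> g = pderivs (SOME ds. \<forall>i. count_list ds i = \<nu> i) g"

definition mild :: "real \<Rightarrow> real \<Rightarrow> real \<Rightarrow> nat \<Rightarrow> (real^'m::finite) set \<Rightarrow> (real^'m \<Rightarrow> real) \<Rightarrow> bool" where
  "mild A B C r V g \<longleftrightarrow> Cr_on r V g \<and>
     (\<forall>\<nu>::'m \<Rightarrow> nat. sum \<nu> UNIV \<le> r \<longrightarrow>
        (\<forall>x\<in>V. \<bar>mderiv \<nu> g x\<bar> \<le> B powr (C + 1) * A ^ (sum \<nu> UNIV) * (fact (sum \<nu> UNIV)) powr (C + 1)))"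

end

theory Submission
  imports Defs "HOL-Library.Multiset"
begin


definition pmono :: "real \<Rightarrow> ('m::finite \<Rightarrow> real) \<Rightarrow> real^'m \<Rightarrow> real" where
  "pmono c p x = c * (\<Prod>j\<in>UNIV. (x $ j) powr p j)"

definition Pos :: "(real^'m::finite) set" where "Pos = {x. \<forall>i. 0 < x $ i}"

lemma open_Pos: "open (Pos :: (real^'m::finite) set)"
proof -
  have eq: "(Pos :: (real^'m::finite) set) = (\<Inter>i\<in>UNIV. {x::real^'m. x $ i > 0})" unfolding Pos_def by auto
  show ?thesis unfolding eq by (intro open_INT finite ballI open_halfspace_component_gt_cart)
qed

lemma line_ev:
  fixes x :: "real^'m::finite"
  assumes "open S" "x \<in> S"
  shows "eventually (\<lambda>t. x + t *\<^sub>R axis i 1 \<in> S) (nhds (0::real))"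
proof -
  have "continuous_on UNIV (\<lambda>t::real. x + t *\<^sub>R axis i 1)" by (auto intro!: continuous_intros)
  hence "open ((\<lambda>t::real. x + t *\<^sub>R axis i 1) -` S)"
    using assms(1) by (simp add: open_vimage)
  hence "eventually (\<lambda>t. t \<in> (\<lambda>t::real. x + t *\<^sub>R axis i 1) -` S) (nhds 0)"
    using assms(2) by (intro eventually_nhds_in_open) auto
  thus ?thesis by simp
qed

lemma pd_cong:
  assumes "open S" "x \<in> S" "\<And>y. y \<in> S \<Longrightarrow> g y = h y"
  shows "pd i g x = pd i h x"
  unfolding pd_def
  apply (rule deriv_cong_ev[OF _ refl])
  using line_ev[OF assms(1,2), of i] by eventually_elim (simp add: assms(3))

lemma line_comp: "((x::real^'m::finite) + t *\<^sub>R axis i 1) $ j = x $ j + (if j = i then t else 0)"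
  by (simp add: axis_def)

lemma pmono_line:
  "pmono c p ((x::real^'m::finite) + t *\<^sub>R axis i 1) = c * ((x $ i + t) powr p i * (\<Prod>j\<in>UNIV-{i}. (x $ j) powr p j))"
proof -
  have "pmono c p (x + t *\<^sub>R axis i 1) = c * ((x $ i + t) powr p i * (\<Prod>j\<in>UNIV-{i}. ((x + t *\<^sub>R axis i 1) $ j) powr p j))"
    unfolding pmono_def by (subst prod.remove[of UNIV i]) (auto simp: line_comp axis_def)
  also have "(\<Prod>j\<in>UNIV-{i}. ((x + t *\<^sub>R axis i 1) $ j) powr p j) = (\<Prod>j\<in>UNIV-{i}. (x $ j) powr p j)"
    by (rule prod.cong) (auto simp: line_comp axis_def)
  finally show ?thesis .
qed

lemma pmono_deriv:
  assumes "x \<in> Pos"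
  shows "((\<lambda>t. pmono c p (x + t *\<^sub>R axis i 1)) has_real_derivative
           pmono (c * p i) (\<lambda>j. p j - (if j = i then 1 else 0)) x) (at 0)"
proof -
  have xi: "x $ i > 0" using assms by (auto simp: Pos_def)
  have d: "((\<lambda>t. (x $ i + t) powr p i) has_real_derivative p i * (x $ i) powr (p i - 1)) (at 0)"
  proof -
    have "((\<lambda>t. x $ i + t) has_real_derivative 1) (at 0)" by (auto intro!: derivative_eq_intros)
    from DERIV_fun_powr[OF this, of "p i"] xi show ?thesis by simp
  qed
  have "((\<lambda>t. c * ((x $ i + t) powr p i * (\<Prod>j\<in>UNIV-{i}. (x $ j) powr p j))) has_real_derivative
     c * (p i * (x $ i) powr (p i - 1) * (\<Prod>j\<in>UNIV-{i}. (x $ j) powr p j))) (at 0)"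
    by (intro DERIV_cmult DERIV_cmult_right d) 
  moreover have "pmono (c * p i) (\<lambda>j. p j - (if j = i then 1 else 0)) x = 
     c * (p i * (x $ i) powr (p i - 1) * (\<Prod>j\<in>UNIV-{i}. (x $ j) powr p j))"
    unfolding pmono_def by (subst prod.remove[of UNIV i]) auto
  ultimately show ?thesis by (simp add: pmono_line)
qed

lemma pd_pmono:
  assumes "x \<in> Pos"
  shows "pd i (pmono c p) x = pmono (c * p i) (\<lambda>j. p j - (if j = i then 1 else 0)) x"
  unfolding pd_def using pmono_deriv[OF assms] by (rule DERIV_imp_deriv)

lemma line_deriv_local:
  fixes x :: "real^'m::finite"
  assumes "x \<in> Pos" "\<And>y. y \<in> Pos \<Longrightarrow> g y = pmono c p y"
  shows "((\<lambda>t. g (x + t *\<^sub>R axis i 1)) has_real_derivative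
           pmono (c * p i) (\<lambda>j. p j - (if j = i then 1 else 0)) x) (at 0)"
proof -
  have "eventually (\<lambda>t. g (x + t *\<^sub>R axis i 1) = pmono c p (x + t *\<^sub>R axis i 1)) (nhds (0::real))"
    using line_ev[OF open_Pos assms(1), of i] by eventually_elim (simp add: assms(2))
  thus ?thesis using pmono_deriv[OF assms(1)] by (subst DERIV_cong_ev[OF refl _ refl]) auto
qed

definition ffall :: "real \<Rightarrow> nat \<Rightarrow> real" where
  "ffall a k = (\<Prod>t<k. (a - real t))"

lemma pderivs_pmono:
  assumes "\<And>y. y \<in> Pos \<Longrightarrow> g y = pmono c p y"
  shows "\<forall>x\<in>Pos. pderivs ds g x = pmono (c * (\<Prod>j\<in>UNIV. ffall (p j) (count_list ds j)))
             (\<lambda>j. p j - real (count_list ds j)) x"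
proof (induction ds)
  case Nil
  then show ?case using assms by (simp add: ffall_def)
next
  case (Cons i ds)
  show ?case
  proof
    fix x :: "real^'a" assume x: "x \<in> Pos"
    have "pderivs (i # ds) g x = pd i (pderivs ds g) x" by simp
    also have "\<dots> = pd i (pmono (c * (\<Prod>j\<in>UNIV. ffall (p j) (count_list ds j)))
             (\<lambda>j. p j - real (count_list ds j))) x"
      by (rule pd_cong[OF open_Pos x]) (use Cons in auto)
    also have "\<dots> = pmono (c * (\<Prod>j\<in>UNIV. ffall (p j) (count_list ds j)) * (p i - real (count_list ds i)))
        (\<lambda>j. p j - real (count_list ds j) - (if j = i then 1 else 0)) x"
      by (rule pd_pmono[OF x])
    also have "\<dots> = pmono (c * (\<Prod>j\<in>UNIV. ffall (p j) (count_list (i # ds) j)))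
             (\<lambda>j. p j - real (count_list (i # ds) j)) x"
    proof -
      have e: "(\<lambda>j. p j - real (count_list ds j) - (if j = i then 1 else 0)) = (\<lambda>j. p j - real (count_list (i # ds) j))"
        by (auto simp: fun_eq_iff)
      have "(\<Prod>j\<in>UNIV. ffall (p j) (count_list (i # ds) j)) =
            ffall (p i) (Suc (count_list ds i)) * (\<Prod>j\<in>UNIV-{i}. ffall (p j) (count_list (i # ds) j))"
        by (subst prod.remove[of UNIV i]) auto
      also have "(\<Prod>j\<in>UNIV-{i}. ffall (p j) (count_list (i # ds) j)) = (\<Prod>j\<in>UNIV-{i}. ffall (p j) (count_list ds j))"
        by (rule prod.cong) auto
      also have "ffall (p i) (Suc (count_list ds i)) = ffall (p i) (count_list ds i) * (p i - real (count_list ds i))"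
        by (simp add: ffall_def)
      also have "(\<Prod>j\<in>UNIV. ffall (p j) (count_list ds j)) = ffall (p i) (count_list ds i) * (\<Prod>j\<in>UNIV-{i}. ffall (p j) (count_list ds j))"
        by (subst prod.remove[of UNIV i]) auto
      ultimately show ?thesis unfolding e by (simp add: ac_simps)
    qed
    finally show "pderivs (i # ds) g x = pmono (c * (\<Prod>j\<in>UNIV. ffall (p j) (count_list (i # ds) j)))
             (\<lambda>j. p j - real (count_list (i # ds) j)) x" .
  qed
qed

lemma continuous_pmono: "continuous_on Pos (pmono c p)"
  unfolding pmono_def by (auto intro!: continuous_intros simp: Pos_def) (metis less_irrefl)

lemma Cr_on_pmono:
  assumes "V \<subseteq> Pos" 
  shows "(\<And>y. y \<in> Pos \<Longrightarrow> g y = pmono c p y) \<Longrightarrow> Cr_on k V g"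
proof (induction k arbitrary: c p g)
  case 0
  have "continuous_on V (pmono c p)" by (rule continuous_on_subset[OF continuous_pmono assms])
  moreover have "continuous_on V g = continuous_on V (pmono c p)"
    by (rule continuous_on_cong) (use 0 assms in auto)
  ultimately show ?case by simp
next
  case (Suc k)
  have "continuous_on V (pmono c p)" by (rule continuous_on_subset[OF continuous_pmono assms])
  moreover have "continuous_on V g = continuous_on V (pmono c p)"
    by (rule continuous_on_cong) (use Suc.prems assms in auto)
  ultimately have c: "continuous_on V g" by simp
  have d: "\<forall>i. \<forall>x\<in>V. (\<lambda>t. g (x + t *\<^sub>R axis i 1)) differentiable (at 0)"
    using line_deriv_local[OF _ Suc.prems] assms unfolding real_differentiable_def by blast
  have "Cr_on k V (pd i g)" for i
  proof (rule Suc.IH)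
    fix y :: "real^'a" assume y: "y \<in> Pos"
    show "pd i g y = pmono (c * p i) (\<lambda>j. p j - (if j = i then 1 else 0)) y"
      unfolding pd_def using line_deriv_local[OF y Suc.prems] by (rule DERIV_imp_deriv)
  qed
  then show ?case using c d by simp
qed


lemma ex_counts: "\<exists>ds. \<forall>i. count_list ds i = (\<nu>::'m::finite \<Rightarrow> nat) i"
proof -
  obtain xs where xs: "mset xs = (\<Sum>i\<in>UNIV. replicate_mset (\<nu> i) i)" using ex_mset by blast
  have "count_list xs j = \<nu> j" for j
  proof -
    have "count_list xs j = (\<Sum>i\<in>UNIV. count (replicate_mset (\<nu> i) i) j)"
      by (simp add: count_mset[symmetric] xs count_sum)
    also have "\<dots> = (\<Sum>i\<in>UNIV. if i = j then \<nu> j else 0)"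
      by (rule sum.cong) auto
    finally show ?thesis by simp
  qed
  thus ?thesis by blast
qed

lemma mderiv_eq: "\<exists>ds. (\<forall>i. count_list ds i = \<nu> i) \<and> mderiv \<nu> g = pderivs ds g"
  unfolding mderiv_def using someI_ex[OF ex_counts[of \<nu>]] by blast

lemma ffall_bound: "\<bar>ffall e k\<bar> \<le> (\<bar>e\<bar> + real k) ^ k"
proof -
  have "\<bar>ffall e k\<bar> = (\<Prod>t<k. \<bar>e - real t\<bar>)" by (simp add: ffall_def abs_prod)
  also have "\<dots> \<le> (\<Prod>t<k. \<bar>e\<bar> + real k)" by (rule prod_mono) auto
  finally show ?thesis by simp
qed

lemma powr_inv_bound:
  assumes "0 \<le> W" "W \<le> B" "1 \<le> B" "R \<ge> (1::real)"
  shows "W powr (1/R) \<le> B"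
proof (cases "W \<le> 1")
  case True
  then have "W powr (1/R) \<le> 1" using assms by (intro powr_le1) auto
  then show ?thesis using assms by linarith
next
  case False
  then have "W powr (1/R) \<le> W powr 1" using assms by (intro powr_mono) auto
  then show ?thesis using assms False by simp
qed

lemma repr:
  fixes y :: "real^'m::finite"
  assumes "y \<in> Pos" "R > 0"
  shows "root R (a * (\<Prod>j\<in>UNIV. ((\<chi> i. (y $ i) ^ n i) $ j) powr (\<mu> $ j))) =
         pmono (root R a) (\<lambda>j. real (n j) * \<mu> $ j / real R) y"
proof -
  have pos: "\<And>j. y $ j > 0" using assms by (auto simp: Pos_def)
  have "(\<Prod>j\<in>UNIV. ((\<chi> i. (y $ i) ^ n i) $ j) powr (\<mu> $ j)) = (\<Prod>j\<in>UNIV. (y $ j) powr (real (n j) * \<mu> $ j))"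
    by (rule prod.cong) (auto simp: powr_realpow[OF pos, symmetric] powr_powr)
  moreover have "root R (\<Prod>j\<in>UNIV. (y $ j) powr (real (n j) * \<mu> $ j)) = (\<Prod>j\<in>UNIV. (y $ j) powr (real (n j) * \<mu> $ j / real R))"
    using assms(2) by (simp add: root_powr_inverse prod_nonneg prod_powr_distrib powr_powr)
  ultimately show ?thesis by (simp add: real_root_mult pmono_def)
qed


lemma prod_remove_one:
  fixes y :: "real^'m::finite"
  assumes "\<And>k. y $ k > 0"
  shows "(\<Prod>k\<in>UNIV. (y $ k) powr (p k - (if k = j then 1 else 0))) = (\<Prod>k\<in>UNIV. (y $ k) powr p k) / y $ j"
proof -
  have "(\<Prod>k\<in>UNIV. (y $ k) powr (p k - (if k = j then 1 else 0))) =
        (y $ j) powr (p j - 1) * (\<Prod>k\<in>UNIV-{j}. (y $ k) powr (p k - (if k = j then 1 else 0)))"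
    by (subst prod.remove[of UNIV j]) auto
  also have "(\<Prod>k\<in>UNIV-{j}. (y $ k) powr (p k - (if k = j then 1 else 0))) = (\<Prod>k\<in>UNIV-{j}. (y $ k) powr p k)"
    by (rule prod.cong) auto
  also have "(y $ j) powr (p j - 1) = (y $ j) powr p j / y $ j"
    using assms[of j] by (simp add: powr_diff)
  also have "(\<Prod>k\<in>UNIV. (y $ k) powr p k) = (y $ j) powr p j * (\<Prod>k\<in>UNIV-{j}. (y $ k) powr p k)"
    by (subst prod.remove[of UNIV j]) auto
  ultimately show ?thesis by simp
qed

lemma W_bound:
  fixes y :: "real^'m::finite" and \<mu> :: "real^'m" and \<nu> :: "'m \<Rightarrow> nat"
  assumes y: "\<And>j. 0 < y $ j" "\<And>j. y $ j < 1"
    and d0: "\<And>j. 0 \<le> d j" and d1: "sum d UNIV \<le> 1" and dz: "\<And>j. \<nu> j = 0 \<Longrightarrow> d j = 0"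
    and mz: "\<And>j. \<nu> j > 0 \<Longrightarrow> \<mu> $ j \<noteq> 0"
    and Mb: "\<bar>a * (\<Prod>j\<in>UNIV. (y $ j) powr (\<mu> $ j))\<bar> \<le> M"
    and Md: "\<And>i. \<bar>pd i (\<lambda>y. a * (\<Prod>j\<in>UNIV. (y $ j) powr (\<mu> $ j))) y\<bar> \<le> M"
  shows "\<bar>a\<bar> * (\<Prod>j\<in>UNIV. (y $ j) powr (\<mu> $ j - d j)) \<le> \<bar>M\<bar> * (1 + (\<Sum>j\<in>UNIV. if \<mu> $ j = 0 then 0 else 1 / \<bar>\<mu> $ j\<bar>))"
proof -
  define b where "b = \<bar>a\<bar> * (\<Prod>j\<in>UNIV. (y $ j) powr (\<mu> $ j))"
  have b0: "0 \<le> b" unfolding b_def by (simp add: prod_nonneg)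
  have bM: "b \<le> \<bar>M\<bar>" using Mb by (simp add: b_def abs_mult prod_nonneg)
  have yp: "y \<in> Pos" using y by (auto simp: Pos_def)
  have fe: "(\<lambda>y. a * (\<Prod>j\<in>UNIV. (y $ j) powr (\<mu> $ j))) = pmono a (\<lambda>j. \<mu> $ j)"
    by (simp add: fun_eq_iff pmono_def)
  have bj: "b / y $ j \<le> \<bar>M\<bar> / \<bar>\<mu> $ j\<bar>" if "\<mu> $ j \<noteq> 0" for j
  proof -
    have "pd j (pmono a (\<lambda>j. \<mu> $ j)) y = a * \<mu> $ j * ((\<Prod>k\<in>UNIV. (y $ k) powr (\<mu> $ k)) / y $ j)"
      using pd_pmono[OF yp] prod_remove_one[OF y(1)] by (simp add: pmono_def)
    hence "\<bar>\<mu> $ j\<bar> * (b / y $ j) \<le> M" using Md[of j] y(1)[of j]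
      by (simp add: fe b_def abs_mult prod_nonneg mult_ac)
    hence "\<bar>\<mu> $ j\<bar> * (b / y $ j) \<le> \<bar>M\<bar>" by linarith
    thus ?thesis using that by (simp add: field_simps)
  qed
  define T where "T = 1 + (\<Sum>j\<in>UNIV. if \<nu> j > 0 then 1 / y $ j else 0)"
  have Tsum: "0 \<le> (\<Sum>j\<in>UNIV. if \<nu> j > 0 then 1 / y $ j else 0)"
    using y by (intro sum_nonneg) (auto intro: less_imp_le)
  have T1: "1 \<le> T" unfolding T_def using Tsum by linarith
  have split: "(\<Prod>j\<in>UNIV. (y $ j) powr (\<mu> $ j - d j)) =
     (\<Prod>j\<in>UNIV. (y $ j) powr (\<mu> $ j)) * (\<Prod>j\<in>UNIV. (1 / y $ j) powr d j)"
    by (simp add: prod.distrib[symmetric] powr_diff powr_divide)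
  have "(\<Prod>j\<in>UNIV. (1 / y $ j) powr d j) \<le> (\<Prod>j\<in>UNIV. T powr d j)"
  proof (rule prod_mono)
    fix j :: 'm
    show "0 \<le> (1 / y $ j) powr d j \<and> (1 / y $ j) powr d j \<le> T powr d j"
    proof (cases "\<nu> j = 0")
      case True then show ?thesis using dz[of j] y(1)[of j] T1 by simp
    next
      case False
      have "1 / y $ j = (if \<nu> j > 0 then 1 / y $ j else 0)" using False by simp
      also have "\<dots> \<le> (\<Sum>j\<in>UNIV. if \<nu> j > 0 then 1 / y $ j else 0)"
        by (rule member_le_sum) (use y in \<open>auto intro: less_imp_le\<close>)
      finally have "1 / y $ j \<le> T" unfolding T_def by linarith
      then show ?thesis using d0[of j] y(1)[of j] by (auto intro: powr_mono2)
    qed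
  qed
  also have "\<dots> = T powr (sum d UNIV)" using T1 by (simp add: powr_sum)
  also have "\<dots> \<le> T powr 1" using T1 d1 by (intro powr_mono) auto
  also have "\<dots> = T" using T1 by simp
  finally have pT: "(\<Prod>j\<in>UNIV. (1 / y $ j) powr d j) \<le> T" .
  have "\<bar>a\<bar> * (\<Prod>j\<in>UNIV. (y $ j) powr (\<mu> $ j - d j)) = b * (\<Prod>j\<in>UNIV. (1 / y $ j) powr d j)"
    by (simp add: split b_def)
  also have "\<dots> \<le> b * T" using pT b0 by (rule mult_left_mono)
  also have "b * T = b + (\<Sum>j\<in>UNIV. if \<nu> j > 0 then b / y $ j else 0)"
    unfolding T_def by (simp add: algebra_simps sum_distrib_left if_distrib cong: if_cong)
  also have "(\<Sum>j\<in>UNIV. if \<nu> j > 0 then b / y $ j else 0) \<le> (\<Sum>j\<in>UNIV. if \<mu> $ j = 0 then 0 else \<bar>M\<bar> / \<bar>\<mu> $ j\<bar>)"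
    by (rule sum_mono) (use mz bj in auto)
  also have "(\<Sum>j\<in>UNIV. if \<mu> $ j = 0 then 0 else \<bar>M\<bar> / \<bar>\<mu> $ j\<bar>) = \<bar>M\<bar> * (\<Sum>j\<in>UNIV. if \<mu> $ j = 0 then 0 else 1 / \<bar>\<mu> $ j\<bar>)"
    by (simp add: sum_distrib_left if_distrib cong: if_cong)
  finally show ?thesis using bM by (simp add: algebra_simps)
qed

theorem mainTheorem4:
  fixes U :: "(real^'m::finite) set" and a :: real and \<mu> :: "real^'m"
  assumes "open U"
    and "U \<subseteq> {x. \<forall>i. 0 < x $ i \<and> x $ i < 1}"
    and "\<exists>M. \<forall>x\<in>U. \<bar>a * (\<Prod>i\<in>UNIV. (x $ i) powr (\<mu> $ i))\<bar> \<le> M \<and>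
             (\<forall>i. \<bar>pd i (\<lambda>y. a * (\<Prod>j\<in>UNIV. (y $ j) powr (\<mu> $ j))) x\<bar> \<le> M)"
  shows "\<exists>A B::real. A > 0 \<and> B > 0 \<and>
    (\<forall>(r::nat) (l::nat) (n::'m \<Rightarrow> nat). r > 0 \<longrightarrow> l \<ge> 1 \<longrightarrow> (\<forall>i. n i \<ge> r ^ l) \<longrightarrow>
       mild (real (Max (range n)) * A) B 0 r
         ({x. \<forall>i. 0 < x $ i \<and> x $ i < 1} \<inter> (\<lambda>x. \<chi> i. (x $ i) ^ n i) -` U)
         (\<lambda>x. root (r ^ (l - 1)) (a * (\<Prod>j\<in>UNIV. ((\<chi> i. (x $ i) ^ n i) $ j) powr (\<mu> $ j)))))"
proof -
  obtain M where M: "\<forall>x\<in>U. \<bar>a * (\<Prod>i\<in>UNIV. (x $ i) powr (\<mu> $ i))\<bar> \<le> M \<and>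
             (\<forall>i. \<bar>pd i (\<lambda>y. a * (\<Prod>j\<in>UNIV. (y $ j) powr (\<mu> $ j))) x\<bar> \<le> M)"
    using assms(3) by blast
  define A where "A = 1 + (\<Sum>j\<in>UNIV. \<bar>\<mu> $ j\<bar>)"
  define B0 where "B0 = \<bar>M\<bar> * (1 + (\<Sum>j\<in>UNIV. if \<mu> $ j = 0 then 0 else 1 / \<bar>\<mu> $ j\<bar>))"
  define B where "B = max 1 B0"
  have A1: "A \<ge> 1" unfolding A_def by (simp add: sum_nonneg)
  have B1: "B \<ge> 1" "B0 \<le> B" unfolding B_def by auto
  show ?thesis
  proof (intro exI conjI allI impI)
    show "A > 0" "B > 0" using A1 B1 by auto
    fix r l :: nat and n :: "'m \<Rightarrow> nat"
    assume r: "r > 0" and l: "1 \<le> l" and n: "\<forall>i. r ^ l \<le> n i"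
    define R where "R = r ^ (l - 1)"
    have R1: "R \<ge> 1" unfolding R_def using r by simp
    have rl: "r ^ l = r * R" unfolding R_def using l by (cases l) auto
    define N where "N = Max (range n)"
    have nN: "n j \<le> N" for j unfolding N_def by (rule Max_ge) auto
    have nr: "r * R \<le> n j" for j using n rl by metis
    have npos: "n j > 0" for j using nr[of j] r R1
      by (metis less_le_trans mult_pos_pos not_gr0 not_one_le_zero)
    define V where "V = {x::real^'m. \<forall>i. 0 < x $ i \<and> x $ i < 1} \<inter> (\<lambda>x. \<chi> i. (x $ i) ^ n i) -` U"
    define g where "g = (\<lambda>x::real^'m. root (r ^ (l - 1)) (a * (\<Prod>j\<in>UNIV. ((\<chi> i. (x $ i) ^ n i) $ j) powr (\<mu> $ j))))"
    define e where "e = (\<lambda>j. real (n j) * \<mu> $ j / real R)"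
    define c where "c = root R a"
    have Vsub: "V \<subseteq> Pos" unfolding V_def Pos_def by auto
    have geq: "g y = pmono c e y" if "y \<in> Pos" for y
      unfolding g_def c_def e_def R_def[symmetric] using repr[OF that, of R] R1 by simp
    have Cr: "Cr_on r V g" by (rule Cr_on_pmono[OF Vsub geq])
    show "mild (real N * A) B 0 r V g"
      unfolding mild_def N_def[symmetric] V_def[symmetric] g_def[symmetric]
    proof (intro conjI allI impI ballI)
      show "Cr_on r V g" by (rule Cr)
      fix \<nu> :: "'m \<Rightarrow> nat" and x assume k: "sum \<nu> UNIV \<le> r" and x: "x \<in> V"
      obtain ds where ds: "\<And>i. count_list ds i = \<nu> i" "mderiv \<nu> g = pderivs ds g"
        using mderiv_eq by blast
      have xP: "x \<in> Pos" using x Vsub by auto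
      have md: "mderiv \<nu> g x = pmono (c * (\<Prod>j\<in>UNIV. ffall (e j) (\<nu> j))) (\<lambda>j. e j - real (\<nu> j)) x"
        using pderivs_pmono[OF geq, of ds] xP by (simp add: ds)
      have absmd: "\<bar>mderiv \<nu> g x\<bar> = \<bar>c\<bar> * \<bar>\<Prod>j\<in>UNIV. ffall (e j) (\<nu> j)\<bar> * (\<Prod>j\<in>UNIV. (x $ j) powr (e j - real (\<nu> j)))"
        by (simp add: md pmono_def abs_mult prod_nonneg)
      have nuN: "\<nu> j \<le> N" for j
      proof -
        have "\<nu> j \<le> sum \<nu> UNIV" by (rule member_le_sum) auto
        also have "\<dots> \<le> r" by (rule k)
        also have "r \<le> r * R" using R1 by simp
        also have "\<dots> \<le> n j" by (rule nr)
        finally show ?thesis using nN[of j] by linarith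
      qed
      have ffb: "\<bar>\<Prod>j\<in>UNIV. ffall (e j) (\<nu> j)\<bar> \<le> (real N * A) ^ sum \<nu> UNIV"
      proof -
        have "\<bar>\<Prod>j\<in>UNIV. ffall (e j) (\<nu> j)\<bar> = (\<Prod>j\<in>UNIV. \<bar>ffall (e j) (\<nu> j)\<bar>)" by (simp add: abs_prod)
        also have "\<dots> \<le> (\<Prod>j\<in>UNIV. (real N * A) ^ \<nu> j)"
        proof (rule prod_mono, intro conjI)
          fix j
          show "0 \<le> \<bar>ffall (e j) (\<nu> j)\<bar>" by simp
          have "\<bar>e j\<bar> = real (n j) * \<bar>\<mu> $ j\<bar> / real R" unfolding e_def by (simp add: abs_mult)
          also have "\<dots> \<le> real (n j) * \<bar>\<mu> $ j\<bar>" using frac_le[of "real (n j) * \<bar>\<mu> $ j\<bar>" "real (n j) * \<bar>\<mu> $ j\<bar>" 1 "real R"] R1 by simp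
          also have "\<dots> \<le> real N * \<bar>\<mu> $ j\<bar>" using nN[of j] by (simp add: mult_right_mono)
          finally have ej: "\<bar>e j\<bar> \<le> real N * \<bar>\<mu> $ j\<bar>" .
          have mj: "\<bar>\<mu> $ j\<bar> \<le> (\<Sum>j\<in>UNIV. \<bar>\<mu> $ j\<bar>)" by (rule member_le_sum) auto
          have "\<bar>e j\<bar> + real (\<nu> j) \<le> real N * \<bar>\<mu> $ j\<bar> + real N" using ej nuN[of j] by simp
          also have "\<dots> = real N * (\<bar>\<mu> $ j\<bar> + 1)" by (simp add: algebra_simps)
          also have "\<dots> \<le> real N * A" unfolding A_def using mj by (intro mult_left_mono) auto
          finally have "\<bar>e j\<bar> + real (\<nu> j) \<le> real N * A" .
          hence "(\<bar>e j\<bar> + real (\<nu> j)) ^ \<nu> j \<le> (real N * A) ^ \<nu> j" by (intro power_mono) auto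
          thus "\<bar>ffall (e j) (\<nu> j)\<bar> \<le> (real N * A) ^ \<nu> j" using ffall_bound[of "e j" "\<nu> j"] by linarith
        qed
        also have "\<dots> = (real N * A) ^ sum \<nu> UNIV" by (simp add: power_sum)
        finally show ?thesis .
      qed
      show "\<bar>mderiv \<nu> g x\<bar> \<le> B powr (0 + 1) * (real N * A) ^ sum \<nu> UNIV * fact (sum \<nu> UNIV) powr (0 + 1)"
      proof (cases "\<exists>j. \<nu> j > 0 \<and> \<mu> $ j = 0")
        case True
        then obtain j where j: "\<nu> j > 0" "\<mu> $ j = 0" by blast
        have "ffall (e j) (\<nu> j) = 0" using j unfolding ffall_def e_def
          by (intro prod_zero) auto
        hence "(\<Prod>j\<in>UNIV. ffall (e j) (\<nu> j)) = 0" by (intro prod_zero) auto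
        hence "\<bar>mderiv \<nu> g x\<bar> = 0" using absmd by simp
        thus ?thesis using B1 A1 by simp
      next
        case False
        hence mz: "\<And>j. \<nu> j > 0 \<Longrightarrow> \<mu> $ j \<noteq> 0" by blast
        have mainb: "\<bar>c\<bar> * (\<Prod>j\<in>UNIV. (x $ j) powr (e j - real (\<nu> j))) \<le> B"
        proof (cases "a = 0")
          case True
          then show ?thesis using B1 by (simp add: c_def)
        next
          case False
          define y where "y = (\<chi> i. (x $ i) ^ n i)"
          have x01: "\<And>j. 0 < x $ j" "\<And>j. x $ j < 1" and yU: "y \<in> U" using x unfolding V_def y_def by auto
          have y0: "\<And>j. 0 < y $ j" and y1: "\<And>j. y $ j < 1" using yU assms(2) by auto
          have yx: "y $ j = x $ j ^ n j" for j by (simp add: y_def)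
          define d where "d = (\<lambda>j. real R * real (\<nu> j) / real (n j))"
          have d0: "\<And>j. 0 \<le> d j" unfolding d_def by simp
          have dz: "\<And>j. \<nu> j = 0 \<Longrightarrow> d j = 0" unfolding d_def by simp
          have dle: "d j \<le> real (\<nu> j) / real r" for j
          proof -
            have "d j \<le> real R * real (\<nu> j) / (real r * real R)"
              unfolding d_def using nr[of j] r R1
              by (intro frac_le) (auto simp flip: of_nat_mult)
            also have "\<dots> = real (\<nu> j) / real r" using R1 by simp
            finally show ?thesis .
          qed
          have d1: "sum d UNIV \<le> 1"
          proof -
            have "sum d UNIV \<le> (\<Sum>j\<in>UNIV. real (\<nu> j) / real r)" by (rule sum_mono) (rule dle)
            also have "\<dots> = real (sum \<nu> UNIV) / real r" by (simp add: sum_divide_distrib)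
            also have "\<dots> \<le> 1" using k r by (simp flip: of_nat_sum)
            finally show ?thesis .
          qed
          have Wb: "\<bar>a\<bar> * (\<Prod>j\<in>UNIV. (y $ j) powr (\<mu> $ j - d j)) \<le> B0"
            unfolding B0_def
            by (rule W_bound[OF y0 y1 d0 d1 dz mz]) (use M yU in auto)
          have W0: "0 \<le> \<bar>a\<bar> * (\<Prod>j\<in>UNIV. (y $ j) powr (\<mu> $ j - d j))" by (simp add: prod_nonneg)
          have cabs: "\<bar>c\<bar> = \<bar>a\<bar> powr (1 / real R)"
            unfolding c_def using R1 by (simp add: real_root_abs[symmetric] root_powr_inverse)
          have each: "((y $ j) powr (\<mu> $ j - d j)) powr (1 / real R) = (x $ j) powr (e j - real (\<nu> j))" for j
          proof -
            have "((y $ j) powr (\<mu> $ j - d j)) powr (1 / real R) = ((x $ j) powr real (n j)) powr ((\<mu> $ j - d j) / real R)"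
              by (simp add: yx powr_realpow[OF x01(1)] powr_powr)
            also have "\<dots> = (x $ j) powr (real (n j) * ((\<mu> $ j - d j) / real R))" by (simp add: powr_powr)
            also have "real (n j) * ((\<mu> $ j - d j) / real R) = e j - real (\<nu> j)"
              unfolding e_def d_def using npos[of j] R1 by (simp add: field_simps)
            finally show ?thesis .
          qed
          have "\<bar>c\<bar> * (\<Prod>j\<in>UNIV. (x $ j) powr (e j - real (\<nu> j))) =
                (\<bar>a\<bar> * (\<Prod>j\<in>UNIV. (y $ j) powr (\<mu> $ j - d j))) powr (1 / real R)"
            by (simp add: powr_mult prod_nonneg prod_powr_distrib each cabs)
          also have "\<dots> \<le> B" using W0 Wb B1 R1 by (intro powr_inv_bound) auto
          finally show ?thesis .
        qed
        have "\<bar>mderiv \<nu> g x\<bar> = (\<bar>c\<bar> * (\<Prod>j\<in>UNIV. (x $ j) powr (e j - real (\<nu> j)))) * \<bar>\<Prod>j\<in>UNIV. ffall (e j) (\<nu> j)\<bar>"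
          using absmd by (simp add: mult_ac)
        also have "\<dots> \<le> B * (real N * A) ^ sum \<nu> UNIV"
          using mainb ffb B1 by (intro mult_mono) (auto simp: prod_nonneg)
        also have "\<dots> \<le> B * (real N * A) ^ sum \<nu> UNIV * fact (sum \<nu> UNIV)"
          using mult_left_mono[of 1 "fact (sum \<nu> UNIV) :: real" "B * (real N * A) ^ sum \<nu> UNIV"] B1 A1
          by (simp add: fact_ge_1)
        finally show ?thesis using B1 by simp
      qed
    qed
  qed
qed

end
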